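(* Let $n\ge1$ players all have the same valuation $v$ on a finite set of goods $M$. Then every leximin++ solution is EFX. That is, any allocation $A$ for which there is no allocation $B$ with $A\prec_{++}B$ is EFX. In particular, an EFX allocation always exists for identical general valuations.
   Context: A valuation is a function $v:2^M\to\mathbb{R}_{\ge0}$ with $v(\emptyset)=0$ that is monotone: $v(S)\le v(T)$ whenever $S\subseteq T$. An allocation is an ordered partition $(A_1,\dots,A_n)$ of $M$; parts may be empty. It is EFX if for all players $i,j$ and every $g\in A_j$ we have $v_i(A_i)\ge v_i(A_j\setminus\{g\})$. For an allocation $A$, let $X^A$ be the ordering of the players by increasing utility $v_i(A_i)$, with ties broken by increasing player index. The leximin++ comparison is defined as follows. For allocations $A$ and $B$, scan $\ell=1,\dots,n$, and let $i=X^A_\ell$ and $j=X^B_\ell$. - If $v_i(A_i)\ne v_j(B_j)$, stop: $A\prec_{++}B$ holds if and only if $v_i(A_i)<v_j(B_j)$. - Otherwise, if $|A_i|\ne|B_j|$, stop: $A\prec_{++}B$ holds if and only if $|A_i|<|B_j|$. - Otherwise continue to $\ell+1$. If the scan finishes without stopping, then $A\prec_{++}B$ is false. A leximin++ solution is an allocation $A$ that is maximal for this comparison: there is no allocation $B$ with $A\prec_{++}B$. *)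

theory Defs
  imports Complex_Main "HOL-Library.Product_Lexorder"
begin

definition valuation :: "'g set \<Rightarrow> ('g set \<Rightarrow> real) \<Rightarrow> bool" where
  "valuation M v \<longleftrightarrow> v {} = 0 \<and> (\<forall>S. S \<subseteq> M \<longrightarrow> v S \<ge> 0)
     \<and> (\<forall>S T. S \<subseteq> T \<and> T \<subseteq> M \<longrightarrow> v S \<le> v T)"

definition is_allocation :: "nat \<Rightarrow> 'g set \<Rightarrow> (nat \<Rightarrow> 'g set) \<Rightarrow> bool" where
  "is_allocation n M A \<longleftrightarrow> (\<forall>i\<in>{1..n}. A i \<subseteq> M)
     \<and> (\<forall>i\<in>{1..n}. \<forall>j\<in>{1..n}. i \<noteq> j \<longrightarrow> A i \<inter> A j = {})
     \<and> (\<Union>i\<in>{1..n}. A i) = M"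

definition is_EFX :: "nat \<Rightarrow> ('g set \<Rightarrow> real) \<Rightarrow> (nat \<Rightarrow> 'g set) \<Rightarrow> bool" where
  "is_EFX n v A \<longleftrightarrow> (\<forall>i\<in>{1..n}. \<forall>j\<in>{1..n}. \<forall>g\<in>A j. v (A i) \<ge> v (A j - {g}))"

text \<open>X^A: players ordered by increasing utility, ties broken by increasing index.\<close>
definition player_order :: "nat \<Rightarrow> ('g set \<Rightarrow> real) \<Rightarrow> (nat \<Rightarrow> 'g set) \<Rightarrow> nat list" where
  "player_order n v A = sort_key (\<lambda>i. (v (A i), i)) [1..<n+1]"

fun scan_less :: "(real \<times> nat) list \<Rightarrow> (real \<times> nat) list \<Rightarrow> bool" where
  "scan_less ((a, s) # xs) ((b, t) # ys) =
     (if a \<noteq> b then a < b else if s \<noteq> t then s < t else scan_less xs ys)"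
| "scan_less _ _ = False"

definition leximinpp_less ::
  "nat \<Rightarrow> ('g set \<Rightarrow> real) \<Rightarrow> (nat \<Rightarrow> 'g set) \<Rightarrow> (nat \<Rightarrow> 'g set) \<Rightarrow> bool" where
  "leximinpp_less n v A B \<longleftrightarrow>
     scan_less (map (\<lambda>i. (v (A i), card (A i))) (player_order n v A))
               (map (\<lambda>j. (v (B j), card (B j))) (player_order n v B))"

definition leximinpp_solution ::
  "nat \<Rightarrow> 'g set \<Rightarrow> ('g set \<Rightarrow> real) \<Rightarrow> (nat \<Rightarrow> 'g set) \<Rightarrow> bool" where
  "leximinpp_solution n M v A \<longleftrightarrow> is_allocation n M A \<and>
     \<not> (\<exists>B. is_allocation n M B \<and> leximinpp_less n v A B)"

end

theory Submission
  imports Defs "HOL-Library.FuncSet"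
begin

lemma insort_key_cong':
  "(\<And>y. y \<in> set (x # ys) \<Longrightarrow> f y = g y) \<Longrightarrow> insort_key f x ys = insort_key g x ys"
  by (induction ys) auto

lemma sort_key_cong':
  "(\<And>x. x \<in> set xs \<Longrightarrow> f x = g x) \<Longrightarrow> sort_key f xs = sort_key g xs"
proof (induction xs)
  case Nil then show ?case by simp
next
  case (Cons x xs)
  have "sort_key f xs = sort_key g xs" using Cons by auto
  then have "sort_key f (x # xs) = insort_key f x (sort_key g xs)" by simp
  also have "\<dots> = insort_key g x (sort_key g xs)"
    by (rule insort_key_cong') (use Cons.prems in auto)
  finally show ?case by simp
qed

lemma insort_app_low:
  fixes f :: "'a \<Rightarrow> 'b::linorder"
  assumes "\<forall>y\<in>set L2. f x \<le> f y"
  shows "insort_key f x (L1 @ L2) = insort_key f x L1 @ L2"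
  using assms
proof (induction L1)
  case Nil then show ?case by (cases L2) auto
qed auto

lemma insort_app_high:
  fixes f :: "'a \<Rightarrow> 'b::linorder"
  assumes "\<forall>y\<in>set L1. f y < f x"
  shows "insort_key f x (L1 @ L2) = L1 @ insort_key f x L2"
  using assms by (induction L1) auto

lemma sort_key_split:
  fixes f :: "'a \<Rightarrow> 'b::linorder"
  shows "sort_key f xs = sort_key f (filter (\<lambda>x. f x < t) xs) @ sort_key f (filter (\<lambda>x. \<not> f x < t) xs)"
proof (induction xs)
  case Nil then show ?case by simp
next
  case (Cons x xs)
  show ?case
  proof (cases "f x < t")
    case True
    have "\<forall>y\<in>set (sort_key f (filter (\<lambda>x. \<not> f x < t) xs)). f x \<le> f y"
      using True by auto
    then show ?thesis using True Cons by (simp add: insort_app_low)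
  next
    case False
    have "\<forall>y\<in>set (sort_key f (filter (\<lambda>x. f x < t) xs)). f y < f x"
      using False by auto
    then show ?thesis using False Cons by (simp add: insort_app_high)
  qed
qed

lemma scan_less_append: "scan_less (xs @ ys) (xs @ zs) = scan_less ys zs"
  by (induction xs) auto

lemma scan_less_irrefl: "\<not> scan_less xs xs"
  by (induction xs) auto

lemma scan_less_trans: "scan_less xs ys \<Longrightarrow> scan_less ys zs \<Longrightarrow> scan_less xs zs"
proof (induction xs arbitrary: ys zs)
  case Nil then show ?case by simp
next
  case (Cons p xs)
  obtain q ys' where ys: "ys = q # ys'" using Cons.prems by (cases ys) auto
  obtain r zs' where zs: "zs = r # zs'" using Cons.prems by (cases zs) auto
  obtain a s where p: "p = (a, s)" by (cases p)
  obtain b t where q: "q = (b, t)" by (cases q)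
  obtain c u where r: "r = (c, u)" by (cases r)
  show ?case using Cons.prems Cons.IH[of ys' zs'] unfolding ys zs p q r
    by (auto split: if_splits)
qed

lemma finite_max_exists:
  assumes "finite S" "S \<noteq> {}" "\<And>x. \<not> P x x" "\<And>x y z. P x y \<Longrightarrow> P y z \<Longrightarrow> P x z"
  shows "\<exists>x\<in>S. \<forall>y\<in>S. \<not> P x y"
  using assms(1,2)
proof (induction S rule: finite_ne_induct)
  case (singleton x) then show ?case using assms(3) by auto
next
  case (insert x F)
  then obtain m where m: "m \<in> F" "\<forall>y\<in>F. \<not> P m y" by auto
  show ?case
  proof (cases "P m x")
    case True
    have "\<forall>y\<in>insert x F. \<not> P x y" using m True assms(3,4) by blast
    then show ?thesis by auto
  next
    case False then show ?thesis using m by auto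
  qed
qed

lemma leximinpp_irrefl: "\<not> leximinpp_less n v A A"
  unfolding leximinpp_less_def by (rule scan_less_irrefl)

lemma leximinpp_trans: "leximinpp_less n v A B \<Longrightarrow> leximinpp_less n v B C \<Longrightarrow> leximinpp_less n v A C"
  unfolding leximinpp_less_def by (rule scan_less_trans)

lemma player_order_cong:
  assumes "\<And>k. k \<in> {1..n} \<Longrightarrow> A k = B k"
  shows "map (\<lambda>i. (v (A i), card (A i))) (player_order n v A)
       = map (\<lambda>i. (v (B i), card (B i))) (player_order n v B)"
proof -
  have "player_order n v A = player_order n v B"
    unfolding player_order_def using assms by (intro sort_key_cong') auto
  moreover have "set (player_order n v B) = {1..n}"
    unfolding player_order_def by auto
  ultimately show ?thesis using assms by auto
qed

lemma solution_EFX: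
  assumes n: "n \<ge> 1" and fin: "finite M" and val: "valuation M v"
    and sol: "leximinpp_solution n M v A"
  shows "is_EFX n v A"
proof (rule ccontr)
  assume "\<not> is_EFX n v A"
  then obtain i0 j g where i0: "i0 \<in> {1..n}" and j: "j \<in> {1..n}" and g: "g \<in> A j"
    and lt: "v (A i0) < v (A j - {g})"
    unfolding is_EFX_def by force
  have alloc: "is_allocation n M A" using sol unfolding leximinpp_solution_def by auto
  have sub: "\<And>k. k \<in> {1..n} \<Longrightarrow> A k \<subseteq> M" using alloc unfolding is_allocation_def by auto
  have disj: "\<And>k l. k \<in> {1..n} \<Longrightarrow> l \<in> {1..n} \<Longrightarrow> k \<noteq> l \<Longrightarrow> A k \<inter> A l = {}"
    using alloc unfolding is_allocation_def by auto
  have uni: "(\<Union>i\<in>{1..n}. A i) = M" using alloc unfolding is_allocation_def by auto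
  have mono: "\<And>S T. S \<subseteq> T \<Longrightarrow> T \<subseteq> M \<Longrightarrow> v S \<le> v T"
    using val unfolding valuation_def by auto
  define a where "a = Min ((\<lambda>k. v (A k)) ` {1..n})"
  have amin: "\<And>k. k \<in> {1..n} \<Longrightarrow> a \<le> v (A k)" unfolding a_def by auto
  have "a \<in> (\<lambda>k. v (A k)) ` {1..n}" unfolding a_def using n by (intro Min_in) auto
  then have Ane: "{k\<in>{1..n}. v (A k) = a} \<noteq> {}" by auto
  define i where "i = Max {k\<in>{1..n}. v (A k) = a}"
  have "i \<in> {k\<in>{1..n}. v (A k) = a}" unfolding i_def using Ane by (intro Max_in) auto
  then have i: "i \<in> {1..n}" and vi: "v (A i) = a" by auto
  have imax: "\<And>k. k \<in> {1..n} \<Longrightarrow> v (A k) = a \<Longrightarrow> k \<le> i" unfolding i_def by auto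
  have "v (A j - {g}) \<le> v (A j)" using sub[OF j] by (intro mono) auto
  have vjg: "v (A j - {g}) > a" using lt amin[OF i0] by auto
  then have vj: "v (A j) > a" using \<open>v (A j - {g}) \<le> v (A j)\<close> by auto
  have ij: "i \<noteq> j" using vi vj by auto
  have gi: "g \<notin> A i" using disj[OF i j ij] g by auto
  have gM: "g \<in> M" using sub[OF j] g by auto
  have finAi: "finite (A i)" using sub[OF i] fin finite_subset by auto
  define B where "B = (\<lambda>k. if k = i then insert g (A i) else if k = j then A j - {g} else A k)"
  have Bi: "B i = insert g (A i)" and Bj: "B j = A j - {g}" and Bk: "\<And>k. k \<noteq> i \<Longrightarrow> k \<noteq> j \<Longrightarrow> B k = A k"
    unfolding B_def using ij by auto
  have vBi: "v (B i) \<ge> a" unfolding Bi using vi sub[OF i] gM by (metis insert_subset mono subset_insertI)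
  have allocB: "is_allocation n M B"
  proof -
    have s: "\<forall>k\<in>{1..n}. B k \<subseteq> M" using sub gM unfolding B_def by auto
    have d: "\<forall>k\<in>{1..n}. \<forall>l\<in>{1..n}. k \<noteq> l \<longrightarrow> B k \<inter> B l = {}"
    proof (intro ballI impI)
      fix k l assume k: "k \<in> {1..n}" and l: "l \<in> {1..n}" and kl: "k \<noteq> l"
      have gk: "\<And>k. k \<in> {1..n} \<Longrightarrow> k \<noteq> j \<Longrightarrow> g \<notin> A k" using disj j g by blast
      show "B k \<inter> B l = {}" unfolding B_def using disj[OF k l kl] gk[OF k] gk[OF l] kl
        by auto
    qed
    have u: "(\<Union>k\<in>{1..n}. B k) = M"
    proof
      show "(\<Union>k\<in>{1..n}. B k) \<subseteq> M" using s by auto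
      show "M \<subseteq> (\<Union>k\<in>{1..n}. B k)"
      proof
        fix x assume "x \<in> M"
        then obtain k where k: "k \<in> {1..n}" "x \<in> A k" using uni by auto
        show "x \<in> (\<Union>k\<in>{1..n}. B k)"
        proof (cases "x = g")
          case True then show ?thesis using i Bi by auto
        next
          case False then show ?thesis using k unfolding B_def
            by (cases "k = i"; cases "k = j") auto
        qed
      qed
    qed
    show ?thesis unfolding is_allocation_def using s d u by auto
  qed
  define xs where "xs = [1..<n+1]"
  define fA where "fA = (\<lambda>k. (v (A k), k))"
  define fB where "fB = (\<lambda>k. (v (B k), k))"
  define hA where "hA = (\<lambda>k. (v (A k), card (A k)))"
  define hB where "hB = (\<lambda>k. (v (B k), card (B k)))"
  define t where "t = (a, i)"
  have setxs: "set xs = {1..n}" unfolding xs_def by auto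
  have lowiff: "\<And>k. k \<in> set xs \<Longrightarrow> (fA k < t) = (fB k < t)"
  proof -
    fix k assume "k \<in> set xs"
    show "(fA k < t) = (fB k < t)"
    proof (cases "k = i")
      case True then show ?thesis unfolding fA_def fB_def t_def using vi vBi by auto
    next
      case False
      show ?thesis
      proof (cases "k = j")
        case True then show ?thesis unfolding fA_def fB_def t_def using vj vjg Bj by auto
      next
        case False2: False
        then show ?thesis unfolding fA_def fB_def using Bk[OF False False2] by simp
      qed
    qed
  qed
  define low where "low = filter (\<lambda>k. fA k < t) xs"
  have lowB: "filter (\<lambda>k. fB k < t) xs = low" unfolding low_def using lowiff
    by (intro filter_cong) auto
  have lowel: "\<And>k. k \<in> set low \<Longrightarrow> B k = A k"
  proof -
    fix k assume "k \<in> set low"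
    then have k: "fA k < t" unfolding low_def by auto
    have "k \<noteq> i" using k unfolding fA_def t_def using vi by auto
    moreover have "k \<noteq> j" using k unfolding fA_def t_def using vj by auto
    ultimately show "B k = A k" using Bk by auto
  qed
  have sortlow: "sort_key fA low = sort_key fB low"
    using lowel unfolding fA_def fB_def by (intro sort_key_cong') auto
  have maplow: "map hA (sort_key fA low) = map hB (sort_key fB low)"
    unfolding sortlow hA_def hB_def using lowel by auto
  define UA where "UA = sort_key fA (filter (\<lambda>k. \<not> fA k < t) xs)"
  define UB where "UB = sort_key fB (filter (\<lambda>k. \<not> fB k < t) xs)"
  have POA: "player_order n v A = sort_key fA low @ UA"
    unfolding player_order_def low_def UA_def xs_def fA_def by (rule sort_key_split)
  have POB: "player_order n v B = sort_key fB low @ UB"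
    unfolding player_order_def lowB[symmetric] UB_def xs_def fB_def by (rule sort_key_split)
  have iUA: "i \<in> set UA" unfolding UA_def fA_def t_def using i vi setxs by auto
  then obtain x0 UA' where UA: "UA = x0 # UA'" by (cases UA) auto
  have sA: "sorted (map fA UA)" unfolding UA_def by simp
  have "fA x0 \<le> fA i" using sA iUA unfolding UA by auto
  moreover have "fA i \<le> fA x0"
  proof -
    have "x0 \<in> set UA" unfolding UA by auto
    then have "\<not> fA x0 < t" unfolding UA_def by auto
    then show ?thesis unfolding t_def fA_def using vi by auto
  qed
  ultimately have "fA x0 = fA i" by auto
  then have x0: "x0 = i" unfolding fA_def by auto
  have iUB: "i \<in> set UB" unfolding UB_def fB_def t_def using i vBi setxs by auto
  then obtain x UB' where UB: "UB = x # UB'" by (cases UB) auto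
  have xin: "x \<in> set UB" unfolding UB by auto
  then have xge: "\<not> fB x < t" and xn: "x \<in> {1..n}" unfolding UB_def using setxs by auto
  have key: "v (B x) > a \<or> (v (B x) = a \<and> card (B x) > card (A i))"
  proof (cases "x = i")
    case True
    then show ?thesis using vBi Bi finAi gi by auto
  next
    case False
    show ?thesis
    proof (cases "x = j")
      case True then show ?thesis using Bj vjg by auto
    next
      case False2: False
      have Bx: "B x = A x" using Bk[OF False False2] .
      have "a \<le> v (A x)" using amin[OF xn] .
      moreover have "v (A x) \<noteq> a"
      proof
        assume "v (A x) = a"
        then have "x < i" using imax[OF xn] False by auto
        then show False using xge Bx \<open>v (A x) = a\<close> unfolding fB_def t_def by auto
      qed
      ultimately show ?thesis using Bx by auto
    qed
  qed
  have mA: "map hA (player_order n v A) = map hA (sort_key fA low) @ (a, card (A i)) # map hA UA'"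
    using POA UA x0 vi by (simp add: hA_def)
  have mB: "map hB (player_order n v B) = map hA (sort_key fA low) @ (v (B x), card (B x)) # map hB UB'"
    using POB UB maplow by (simp add: hB_def)
  have eq: "leximinpp_less n v A B = scan_less (map hA (player_order n v A)) (map hB (player_order n v B))"
    unfolding leximinpp_less_def hA_def hB_def by (rule refl)
  have sc: "scan_less ((a, card (A i)) # map hA UA') ((v (B x), card (B x)) # map hB UB')"
    using key by auto
  have "leximinpp_less n v A B"
    unfolding eq mA mB scan_less_append using sc .
  then show False using sol allocB unfolding leximinpp_solution_def by auto
qed

theorem theorem4p2:
  fixes n :: nat and M :: "'g set" and v :: "'g set \<Rightarrow> real"
  assumes "n \<ge> 1" and "finite M" and "valuation M v"
  shows "(\<forall>A. leximinpp_solution n M v A \<longrightarrow> is_EFX n v A)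
         \<and> (\<exists>A. is_allocation n M A \<and> is_EFX n v A)"
proof -
  have P1: "\<forall>A. leximinpp_solution n M v A \<longrightarrow> is_EFX n v A"
    using solution_EFX assms by blast
  define S where "S = {A. is_allocation n M A} \<inter> PiE {1..n} (\<lambda>_. Pow M)"
  have finS: "finite S" unfolding S_def using assms(2) by (intro finite_Int disjI2 finite_PiE) auto
  define A0 where "A0 = (\<lambda>k::nat. if k = 1 then M else {})"
  have "is_allocation n M A0" unfolding is_allocation_def A0_def using assms(1) by auto
  have restr: "\<And>B. is_allocation n M B \<Longrightarrow> restrict B {1..n} \<in> S \<and>
      (\<forall>X. leximinpp_less n v X B = leximinpp_less n v X (restrict B {1..n}))"
  proof -
    fix B assume B: "is_allocation n M B"
    have "is_allocation n M (restrict B {1..n})" using B unfolding is_allocation_def by auto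
    moreover have "restrict B {1..n} \<in> PiE {1..n} (\<lambda>_. Pow M)"
      using B unfolding is_allocation_def by auto
    moreover have "\<forall>X. leximinpp_less n v X B = leximinpp_less n v X (restrict B {1..n})"
      unfolding leximinpp_less_def using player_order_cong[of n B "restrict B {1..n}" v] by auto
    ultimately show "restrict B {1..n} \<in> S \<and>
      (\<forall>X. leximinpp_less n v X B = leximinpp_less n v X (restrict B {1..n}))"
      unfolding S_def by auto
  qed
  have Sne: "S \<noteq> {}" using restr[OF \<open>is_allocation n M A0\<close>] by auto
  obtain A where A: "A \<in> S" "\<forall>B\<in>S. \<not> leximinpp_less n v A B"
  proof -
    have "\<exists>x\<in>S. \<forall>y\<in>S. \<not> leximinpp_less n v x y"
    proof (rule finite_max_exists[OF finS Sne])
      show "\<And>x. \<not> leximinpp_less n v x x" by (rule leximinpp_irrefl)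
      show "\<And>x y z. leximinpp_less n v x y \<Longrightarrow> leximinpp_less n v y z \<Longrightarrow> leximinpp_less n v x z"
        by (rule leximinpp_trans)
    qed
    then show ?thesis using that by blast
  qed
  have Aal: "is_allocation n M A" using A(1) unfolding S_def by simp
  have "\<not> (\<exists>B. is_allocation n M B \<and> leximinpp_less n v A B)"
  proof
    assume "\<exists>B. is_allocation n M B \<and> leximinpp_less n v A B"
    then obtain B where B: "is_allocation n M B" "leximinpp_less n v A B" by blast
    have "restrict B {1..n} \<in> S" "leximinpp_less n v A (restrict B {1..n})"
      using restr[OF B(1)] B(2) by auto
    then show False using A(2) by blast
  qed
  then have sol: "leximinpp_solution n M v A"
    unfolding leximinpp_solution_def using Aal by blast
  then show ?thesis using P1 unfolding leximinpp_solution_def by blast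
qed

end
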